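(* Let $I=[a,b]$, $K_1,K_2\in C(I\times I,\mathbb{R})$, $h\in C(I,\mathbb{R})$, and let $f,g:I\times\mathbb{R}\to\mathbb{R}$ be continuous. Consider the integral equation $$x(t)=\int_a^b\big(K_1(t,s)+K_2(t,s)\big)\big(f(s,x(s))+g(s,x(s))\big)\,ds+h(t),\qquad t\in I.$$ Assume: (i) $K_1(t,s)\ge0$ and $K_2(t,s)\le0$ for all $t,s\in I$; (ii) there exist $\theta\in\Theta$ and positive numbers $\lambda,\mu$ such that for all $t\in I$ and all $x,y\in\mathbb{R}$ with $x\ge y$, $$0\le f(t,x)-f(t,y)\le\lambda\,\theta(x-y),\qquad -\mu\,\theta(x-y)\le g(t,x)-g(t,y)\le 0;$$ (iii) $(\lambda+\mu)\cdot\sup_{t\in I}\int_a^b\big[K_1(t,s)-K_2(t,s)\big]ds\le 1$. If the equation admits a coupled lower-upper solution, then it has a unique solution in $C(I,\mathbb{R})$.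
   Context: $\Psi$ is the set of all functions $\psi:[0,\infty)\to[0,\infty)$ such that for every $r>0$ the limit $\lim_{t\to r}\psi(t)$ exists and is $>0$, and $\lim_{t\to0^+}\psi(t)=0$. $\Theta$ is the set of all functions $\theta:[0,\infty)\to[0,\infty)$ that are nondecreasing and for which there exists $\psi\in\Psi$ with $\theta(r)=\frac r2-\psi\!\left(\frac r2\right)$ for all $r\ge0$. A pair $(\alpha,\beta)$ of functions in $C(I,\mathbb{R})$ is a coupled lower-upper solution of the equation if for all $t\in I$: $$\alpha(t)\le\int_a^bK_1(t,s)[f(s,\alpha(s))+g(s,\beta(s))]ds+\int_a^bK_2(t,s)[f(s,\beta(s))+g(s,\alpha(s))]ds+h(t),$$ $$\beta(t)\ge\int_a^bK_1(t,s)[f(s,\beta(s))+g(s,\alpha(s))]ds+\int_a^bK_2(t,s)[f(s,\alpha(s))+g(s,\beta(s))]ds+h(t).$$ *)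

theory Defs
  imports "HOL-Analysis.Analysis"
begin

text \<open>The class Psi: functions [0,oo) -> [0,oo) with a positive limit at every r > 0
  and limit 0 at 0 from the right.  Only values on [0,oo) matter.\<close>
definition Psi_class :: "(real \<Rightarrow> real) \<Rightarrow> bool" where
  "Psi_class \<psi> \<longleftrightarrow>
     (\<forall>t\<ge>0. \<psi> t \<ge> 0) \<and>
     (\<forall>r>0. \<exists>L>0. (\<psi> \<longlongrightarrow> L) (at r)) \<and>
     (\<psi> \<longlongrightarrow> 0) (at_right 0)"

definition Theta_class :: "(real \<Rightarrow> real) \<Rightarrow> bool" where
  "Theta_class \<theta> \<longleftrightarrow>
     (\<forall>r\<ge>0. \<theta> r \<ge> 0) \<and>
     mono_on {0..} \<theta> \<and>
     (\<exists>\<psi>. Psi_class \<psi> \<and> (\<forall>r\<ge>0. \<theta> r = r / 2 - \<psi> (r / 2)))"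

definition coupled_lower_upper ::
  "real \<Rightarrow> real \<Rightarrow> (real \<Rightarrow> real \<Rightarrow> real) \<Rightarrow> (real \<Rightarrow> real \<Rightarrow> real) \<Rightarrow>
   (real \<Rightarrow> real \<Rightarrow> real) \<Rightarrow> (real \<Rightarrow> real \<Rightarrow> real) \<Rightarrow> (real \<Rightarrow> real) \<Rightarrow>
   (real \<Rightarrow> real) \<Rightarrow> (real \<Rightarrow> real) \<Rightarrow> bool" where
  "coupled_lower_upper a b K1 K2 f g h \<alpha> \<beta> \<longleftrightarrow>
     continuous_on {a..b} \<alpha> \<and> continuous_on {a..b} \<beta> \<and>
     (\<forall>t\<in>{a..b}.
        \<alpha> t \<le> integral {a..b} (\<lambda>s. K1 t s * (f s (\<alpha> s) + g s (\<beta> s)))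
               + integral {a..b} (\<lambda>s. K2 t s * (f s (\<beta> s) + g s (\<alpha> s))) + h t \<and>
        \<beta> t \<ge> integral {a..b} (\<lambda>s. K1 t s * (f s (\<beta> s) + g s (\<alpha> s)))
               + integral {a..b} (\<lambda>s. K2 t s * (f s (\<alpha> s) + g s (\<beta> s))) + h t)"

definition is_solution ::
  "real \<Rightarrow> real \<Rightarrow> (real \<Rightarrow> real \<Rightarrow> real) \<Rightarrow> (real \<Rightarrow> real \<Rightarrow> real) \<Rightarrow>
   (real \<Rightarrow> real \<Rightarrow> real) \<Rightarrow> (real \<Rightarrow> real \<Rightarrow> real) \<Rightarrow> (real \<Rightarrow> real) \<Rightarrow>
   (real \<Rightarrow> real) \<Rightarrow> bool" where
  "is_solution a b K1 K2 f g h x \<longleftrightarrow>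
     continuous_on {a..b} x \<and>
     (\<forall>t\<in>{a..b}. x t = integral {a..b} (\<lambda>s. (K1 t s + K2 t s) * (f s (x s) + g s (x s))) + h t)"

end

theory Submission
  imports Defs
begin

lemma clamp_props:
  fixes a b :: real
  assumes "a \<le> b"
  shows "max a (min b t) \<in> {a..b}" and "t \<in> {a..b} \<Longrightarrow> max a (min b t) = t"
  using assms by auto

lemma clamp_bcontfun:
  fixes a b :: real and g :: "real \<Rightarrow> real"
  assumes ab: "a \<le> b" and gc: "continuous_on {a..b} g"
  shows "(\<lambda>t. g (max a (min b t))) \<in> bcontfun"
proof -
  have c1: "continuous_on UNIV (\<lambda>t::real. max a (min b t))"
    by (intro continuous_intros)
  have im: "(\<lambda>t::real. max a (min b t)) ` UNIV \<subseteq> {a..b}" using ab by auto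
  have "continuous_on UNIV (\<lambda>t. g (max a (min b t)))"
    using continuous_on_compose[OF c1 continuous_on_subset[OF gc im]] by (simp add: o_def)
  moreover have "bounded (range (\<lambda>t. g (max a (min b t))))"
  proof -
    have "compact (g ` {a..b})" using compact_continuous_image[OF gc] by simp
    then have "bounded (g ` {a..b})" by (rule compact_imp_bounded)
    moreover have "range (\<lambda>t. g (max a (min b t))) \<subseteq> g ` {a..b}" using im by auto
    ultimately show ?thesis using bounded_subset by blast
  qed
  ultimately show ?thesis by (simp add: bcontfun_def)
qed

theorem theorem3p1:
  fixes a b lam mu :: real
    and \<theta> :: "real \<Rightarrow> real"
    and K1 K2 f g :: "real \<Rightarrow> real \<Rightarrow> real"
    and h :: "real \<Rightarrow> real"
  assumes ab: "a \<le> b"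
    and K1c: "continuous_on ({a..b} \<times> {a..b}) (\<lambda>(t, s). K1 t s)"
    and K2c: "continuous_on ({a..b} \<times> {a..b}) (\<lambda>(t, s). K2 t s)"
    and hc: "continuous_on {a..b} h"
    and fc: "continuous_on ({a..b} \<times> UNIV) (\<lambda>(t, x). f t x)"
    and gc: "continuous_on ({a..b} \<times> UNIV) (\<lambda>(t, x). g t x)"
    and K1pos: "\<forall>t\<in>{a..b}. \<forall>s\<in>{a..b}. K1 t s \<ge> 0"
    and K2neg: "\<forall>t\<in>{a..b}. \<forall>s\<in>{a..b}. K2 t s \<le> 0"
    and theta: "Theta_class \<theta>"
    and lam: "lam > 0" and mu: "mu > 0"
    and fL: "\<forall>t\<in>{a..b}. \<forall>x y. x \<ge> y \<longrightarrow>
               0 \<le> f t x - f t y \<and> f t x - f t y \<le> lam * \<theta> (x - y)"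
    and gL: "\<forall>t\<in>{a..b}. \<forall>x y. x \<ge> y \<longrightarrow>
               - mu * \<theta> (x - y) \<le> g t x - g t y \<and> g t x - g t y \<le> 0"
    and sup: "(lam + mu) * (SUP t\<in>{a..b}. integral {a..b} (\<lambda>s. K1 t s - K2 t s)) \<le> 1"
    and lu: "\<exists>\<alpha> \<beta>. coupled_lower_upper a b K1 K2 f g h \<alpha> \<beta>"
  shows "\<exists>x. is_solution a b K1 K2 f g h x \<and>
           (\<forall>y. is_solution a b K1 K2 f g h y \<longrightarrow> (\<forall>t\<in>{a..b}. y t = x t))"
proof -
  define T where "T = (\<lambda>(x::real\<Rightarrow>real) t. integral {a..b} (\<lambda>s. (K1 t s + K2 t s) * (f s (x s) + g s (x s))) + h t)"
  define cl where "cl = (\<lambda>t::real. max a (min b t))"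
  have th_half: "\<theta> r \<le> r / 2" "\<theta> r \<ge> 0" if "r \<ge> 0" for r
    using theta that unfolding Theta_class_def Psi_class_def by force+
  have Kcont: "continuous_on ({a..b} \<times> {a..b}) (\<lambda>(t, s). K1 t s + K2 t s)"
    "continuous_on ({a..b} \<times> {a..b}) (\<lambda>(t, s). K1 t s - K2 t s)"
    using continuous_on_add[OF K1c K2c] continuous_on_diff[OF K1c K2c]
    by (simp_all add: case_prod_beta)
  have Fcont: "continuous_on ({a..b} \<times> {a..b}) (\<lambda>(t, s). f s (x s) + g s (x s))"
    if xc: "continuous_on {a..b} x" for x
  proof -
    have c: "continuous_on ({a..b} \<times> {a..b}) (\<lambda>p::real\<times>real. (snd p, x (snd p)))"
      by (intro continuous_intros continuous_on_compose2[OF xc]) auto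
    have im: "(\<lambda>p::real\<times>real. (snd p, x (snd p))) ` ({a..b} \<times> {a..b}) \<subseteq> {a..b} \<times> UNIV" by auto
    have "continuous_on ({a..b} \<times> {a..b}) (\<lambda>p. f (snd p) (x (snd p)))"
      using continuous_on_compose2[OF fc c im] by simp
    moreover have "continuous_on ({a..b} \<times> {a..b}) (\<lambda>p. g (snd p) (x (snd p)))"
      using continuous_on_compose2[OF gc c im] by simp
    ultimately show ?thesis using continuous_on_add by (simp add: case_prod_beta)
  qed
  have Tcont: "continuous_on {a..b} (T x)" if xc: "continuous_on {a..b} x" for x
  proof -
    have "continuous_on ({a..b} \<times> {a..b}) (\<lambda>(t, s). (K1 t s + K2 t s) * (f s (x s) + g s (x s)))"
      using continuous_on_mult[OF Kcont(1) Fcont[OF xc]] by (simp add: case_prod_beta)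
    then have "continuous_on {a..b} (\<lambda>t. integral (cbox a b) (\<lambda>s. (K1 t s + K2 t s) * (f s (x s) + g s (x s))))"
      by (intro integral_continuous_on_param) (simp add: cbox_interval)
    then show ?thesis unfolding T_def using continuous_on_add[OF _ hc] by (simp add: cbox_interval)
  qed
  have slice: "continuous_on {a..b} (\<lambda>s. G t s)"
    if "continuous_on ({a..b} \<times> {a..b}) (\<lambda>(t, s). G t s)" "t \<in> {a..b}" for G :: "real \<Rightarrow> real \<Rightarrow> real" and t
  proof -
    have c: "continuous_on {a..b} (\<lambda>s::real. (t, s))" by (intro continuous_intros)
    have "(\<lambda>s::real. (t, s)) ` {a..b} \<subseteq> {a..b} \<times> {a..b}" using that(2) by auto
    from continuous_on_compose2[OF that(1) c this] show ?thesis by simp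
  qed
  define I where "I = (\<lambda>t. integral {a..b} (\<lambda>s. K1 t s - K2 t s))"
  have Icont: "continuous_on {a..b} I"
    unfolding I_def using integral_continuous_on_param[OF Kcont(2)[folded cbox_interval]]
    by (simp add: cbox_interval)
  have bdd: "bdd_above (I ` {a..b})"
    by (intro bounded_imp_bdd_above compact_imp_bounded compact_continuous_image Icont) simp
  have Ile: "(lam + mu) * I t \<le> 1" if "t \<in> {a..b}" for t
  proof -
    have "I t \<le> (SUP t\<in>{a..b}. I t)" by (rule cSUP_upper[OF that bdd])
    then have "(lam + mu) * I t \<le> (lam + mu) * (SUP t\<in>{a..b}. I t)" using lam mu by simp
    then show ?thesis using sup unfolding I_def by simp
  qed
  have Fdiff: "\<bar>(f s u + g s u) - (f s v + g s v)\<bar> \<le> (lam + mu) * (d / 2)"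
    if s: "s \<in> {a..b}" and uv: "\<bar>u - v\<bar> \<le> d" for s u v d
  proof -
    have d0: "d \<ge> 0" using uv by linarith
    have key: "\<bar>(f s u + g s u) - (f s v + g s v)\<bar> \<le> (lam + mu) * \<theta> (u - v)" if "u \<ge> v" for u v
    proof -
      have "\<theta> (u - v) \<ge> 0" using th_half that by simp
      moreover have "0 \<le> f s u - f s v" "f s u - f s v \<le> lam * \<theta> (u - v)"
        using fL s that by auto
      moreover have "- mu * \<theta> (u - v) \<le> g s u - g s v" "g s u - g s v \<le> 0"
        using gL s that by auto
      ultimately show ?thesis using lam mu by (auto simp: abs_le_iff algebra_simps)
    qed
    show ?thesis
    proof (cases "u \<ge> v")
      case True
      have "\<theta> (u - v) \<le> d / 2" using th_half[of "u-v"] True uv by simp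
      then show ?thesis using key[OF True] lam mu
        by (smt (verit) mult_left_mono)
    next
      case False
      have "\<theta> (v - u) \<le> d / 2" using th_half[of "v-u"] False uv by simp
      then show ?thesis using key[of u v] False lam mu
        by (smt (verit) mult_left_mono)
    qed
  qed
  have Tbound: "\<bar>T x t - T y t\<bar> \<le> d / 2"
    if xc: "continuous_on {a..b} x" and yc: "continuous_on {a..b} y"
      and d: "\<forall>s\<in>{a..b}. \<bar>x s - y s\<bar> \<le> d" and d0: "d \<ge> 0" and t: "t \<in> {a..b}" for x y d t
  proof -
    let ?gx = "\<lambda>s. (K1 t s + K2 t s) * (f s (x s) + g s (x s))"
    let ?gy = "\<lambda>s. (K1 t s + K2 t s) * (f s (y s) + g s (y s))"
    have ix: "?gx integrable_on {a..b}"
      by (rule integrable_continuous_interval, rule continuous_on_mult[OF slice[OF Kcont(1) t]])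
        (rule slice[OF Fcont[OF xc] t])
    have iy: "?gy integrable_on {a..b}"
      by (rule integrable_continuous_interval, rule continuous_on_mult[OF slice[OF Kcont(1) t]])
        (rule slice[OF Fcont[OF yc] t])
    have iK: "(\<lambda>s. K1 t s - K2 t s) integrable_on {a..b}"
      by (rule integrable_continuous_interval, rule slice[OF Kcont(2) t])
    have "\<bar>T x t - T y t\<bar> = norm (integral {a..b} (\<lambda>s. ?gx s - ?gy s))"
      unfolding T_def using integral_diff[OF ix iy] by simp
    also have "\<dots> \<le> integral {a..b} (\<lambda>s. (K1 t s - K2 t s) * ((lam + mu) * (d / 2)))"
    proof (rule integral_norm_bound_integral)
      show "(\<lambda>s. ?gx s - ?gy s) integrable_on {a..b}" using integrable_diff[OF ix iy] .
      show "(\<lambda>s. (K1 t s - K2 t s) * ((lam + mu) * (d / 2))) integrable_on {a..b}"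
        using integrable_on_mult_left[OF iK] by simp
    next
      fix s assume s: "s \<in> {a..b}"
      have k1: "K1 t s \<ge> 0" and k2: "K2 t s \<le> 0" using K1pos K2neg t s by auto
      have ak: "\<bar>K1 t s + K2 t s\<bar> \<le> K1 t s - K2 t s" using k1 k2 by linarith
      have fd: "\<bar>(f s (x s) + g s (x s)) - (f s (y s) + g s (y s))\<bar> \<le> (lam + mu) * (d / 2)"
        using Fdiff[OF s] d s by blast
      have "norm (?gx s - ?gy s) = \<bar>K1 t s + K2 t s\<bar> * \<bar>(f s (x s) + g s (x s)) - (f s (y s) + g s (y s))\<bar>"
        by (simp add: abs_mult[symmetric] algebra_simps)
      also have "\<dots> \<le> (K1 t s - K2 t s) * ((lam + mu) * (d / 2))"
        by (rule mult_mono[OF ak fd]) (use k1 k2 in auto)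
      finally show "norm (?gx s - ?gy s) \<le> (K1 t s - K2 t s) * ((lam + mu) * (d / 2))" .
    qed
    also have "\<dots> = ((lam + mu) * I t) * (d / 2)"
      unfolding I_def integral_mult_left by (simp add: algebra_simps)
    also have "\<dots> \<le> 1 * (d / 2)"
      by (rule mult_right_mono[OF Ile[OF t]]) (use d0 in simp)
    finally show ?thesis by simp
  qed
  have clin: "cl t \<in> {a..b}" for t unfolding cl_def using ab by auto
  have clid: "t \<in> {a..b} \<Longrightarrow> cl t = t" for t unfolding cl_def by auto
  have ucont: "continuous_on {a..b} (apply_bcontfun u)" for u :: "real \<Rightarrow>\<^sub>C real" by simp
  define \<Phi> where "\<Phi> = (\<lambda>u::real \<Rightarrow>\<^sub>C real. Bcontfun (\<lambda>t. T (apply_bcontfun u) (cl t)))"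
  have Phi_app: "apply_bcontfun (\<Phi> u) t = T (apply_bcontfun u) (cl t)" for u t
    unfolding \<Phi>_def cl_def
    using clamp_bcontfun[OF ab Tcont[OF ucont]] by (simp add: Bcontfun_inverse)
  have lip: "\<forall>u v. dist (\<Phi> u) (\<Phi> v) \<le> (1/2) * dist u v"
  proof (intro allI)
    fix u v :: "real \<Rightarrow>\<^sub>C real"
    show "dist (\<Phi> u) (\<Phi> v) \<le> (1/2) * dist u v"
    proof (rule dist_bound)
      fix t
      have "\<forall>s\<in>{a..b}. \<bar>u s - v s\<bar> \<le> dist u v"
        using dist_bounded[of u _ v] by (simp add: dist_real_def)
      from Tbound[OF ucont ucont this zero_le_dist clin]
      show "dist (\<Phi> u t) (\<Phi> v t) \<le> (1/2) * dist u v"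
        by (simp add: Phi_app dist_real_def)
    qed
  qed
  have ex1: "\<exists>!u. \<Phi> u = u" by (rule banach_fix_type[of "1/2" \<Phi>]) (use lip in simp_all)
  then obtain u where fixu: "\<Phi> u = u" by blast
  have uniq: "\<And>w. \<Phi> w = w \<Longrightarrow> w = u" using ex1 fixu by blast
  have usol: "is_solution a b K1 K2 f g h (apply_bcontfun u)"
    unfolding is_solution_def
  proof (intro conjI ballI)
    show "continuous_on {a..b} (apply_bcontfun u)" by simp
    fix t assume t: "t \<in> {a..b}"
    have "apply_bcontfun u t = apply_bcontfun (\<Phi> u) t" using fixu by simp
    also have "\<dots> = T (apply_bcontfun u) t" using Phi_app clid[OF t] by simp
    finally show "apply_bcontfun u t = integral {a..b} (\<lambda>s. (K1 t s + K2 t s) * (f s (u s) + g s (u s))) + h t"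
      unfolding T_def by simp
  qed
  show ?thesis
  proof (intro exI conjI allI impI ballI)
    show "is_solution a b K1 K2 f g h (apply_bcontfun u)" by (rule usol)
    fix y t assume ys: "is_solution a b K1 K2 f g h y" and t: "t \<in> {a..b}"
    have yc: "continuous_on {a..b} y" using ys unfolding is_solution_def by simp
    define w where "w = Bcontfun (\<lambda>t. y (cl t))"
    have w_app: "apply_bcontfun w t = y (cl t)" for t
      unfolding w_def cl_def using clamp_bcontfun[OF ab yc] by (simp add: Bcontfun_inverse)
    have Tw: "T (apply_bcontfun w) r = T y r" for r
      unfolding T_def w_app by (intro arg_cong2[where f="(+)"] refl integral_cong) (simp add: clid)
    have "\<Phi> w = w"
    proof (rule bcontfun_eqI)
      fix r
      have "T y (cl r) = y (cl r)"
        using ys clin[of r] unfolding is_solution_def T_def by simp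
      then show "apply_bcontfun (\<Phi> w) r = apply_bcontfun w r"
        by (simp add: Phi_app Tw w_app)
    qed
    then have "w = u" by (rule uniq)
    then show "y t = apply_bcontfun u t" using w_app[of t] clid[OF t] by simp
  qed
qed

end
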